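(* Let $A,B\in\mathcal A_n$. Then $A\le B$ in ASM order if and only if there is a directed path from $A$ to $B$ in the ASM graph $(\mathcal A_n,\to)$.
   Context: An $n\times n$ matrix $A=(a_{ij})$ is an alternating sign matrix (ASM) if all $a_{ij}\in\{-1,0,1\}$, all partial row sums $\sum_{k\le j}a_{ik}$ and partial column sums $\sum_{k\le i}a_{kj}$ lie in $\{0,1\}$, and every full row sum and column sum equals $1$; $\mathcal A_n$ is the set of $n\times n$ ASMs. The corner sum matrix is $\widetilde A(i,j)=\sum_{p\le i,q\le j}a_{pq}$, with $\widetilde A(i,j)=0$ if $i=0$ or $j=0$. ASM order: $A\le B$ iff $\widetilde A(i,j)\ge\widetilde B(i,j)$ for all $i,j\in[n]$. For $i<j$, $k<l$ in $[n]$, $R_{ij}^{kl}=\{(p,q): i\le p<j,\ k\le q<l\}$ and $\widetilde R_{ij}^{kl}$ is the $0/1$ indicator matrix of $R_{ij}^{kl}$. $E(A)$ (essential rectangles): those $R_{ij}^{kl}$ with, for all $(p,q)\in R_{ij}^{kl}$, $\widetilde A(p,k)=\widetilde A(p,k-1)$, $\widetilde A(p,l)=\widetilde A(p,l-1)+1$, $\widetilde A(i,q)=\widetilde A(i-1,q)$, $\widetilde A(j,q)=\widetilde A(j-1,q)+1$. $E^*(A)$ (dual essential rectangles): those with $\widetilde A(p,k)=\widetilde A(p,k-1)+1$, $\widetilde A(p,l)=\widetilde A(p,l-1)$, $\widetilde A(i,q)=\widetilde A(i-1,q)+1$, $\widetilde A(j,q)=\widetilde A(j-1,q)$. The operator $r_{ij}^{kl}$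 sends $A$ to the ASM with corner sum matrix $\widetilde A+\widetilde R_{ij}^{kl}$ if $R_{ij}^{kl}\in E(A)$, $\widetilde A-\widetilde R_{ij}^{kl}$ if $R_{ij}^{kl}\in E^*(A)$, $\widetilde A$ otherwise. The bigrassmannian statistic is $\beta(A)=\sum_{i,j=1}^n\min(i,j)-\sum_{i,j=1}^n\widetilde A(i,j)$. ASM graph: directed edge $A\to B$ (labelled $(i,j,k,l)$, written $A\xrightarrow{ij,kl}B$) if $B=r_{ij}^{kl}(A)$ and $\beta(A)<\beta(B)$. *)

theory Defs
  imports Main
begin

text \<open>An n x n integer matrix is represented as a function nat => nat => int,
  with rows and columns indexed by 1..n; entries outside [1..n]x[1..n] are required to be 0.\<close>

type_synonym imat = "nat \<Rightarrow> nat \<Rightarrow> int"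

definition is_ASM :: "nat \<Rightarrow> imat \<Rightarrow> bool" where
  "is_ASM n A \<longleftrightarrow>
     (\<forall>i j. (i \<notin> {1..n} \<or> j \<notin> {1..n}) \<longrightarrow> A i j = 0) \<and>
     (\<forall>i\<in>{1..n}. \<forall>j\<in>{1..n}. A i j \<in> {-1, 0, 1}) \<and>
     (\<forall>i\<in>{1..n}. \<forall>j\<in>{1..n}. (\<Sum>k=1..j. A i k) \<in> {0, 1}) \<and>
     (\<forall>i\<in>{1..n}. \<forall>j\<in>{1..n}. (\<Sum>k=1..i. A k j) \<in> {0, 1}) \<and>
     (\<forall>i\<in>{1..n}. (\<Sum>k=1..n. A i k) = 1) \<and>
     (\<forall>j\<in>{1..n}. (\<Sum>k=1..n. A k j) = 1)"

definition csum :: "imat \<Rightarrow> nat \<Rightarrow> nat \<Rightarrow> int" where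
  "csum A i j = (\<Sum>p=1..i. \<Sum>q=1..j. A p q)"

definition asm_le :: "nat \<Rightarrow> imat \<Rightarrow> imat \<Rightarrow> bool" where
  "asm_le n A B \<longleftrightarrow> (\<forall>i\<in>{1..n}. \<forall>j\<in>{1..n}. csum A i j \<ge> csum B i j)"

definition rect :: "nat \<Rightarrow> nat \<Rightarrow> nat \<Rightarrow> nat \<Rightarrow> (nat \<times> nat) set" where
  "rect i j k l = {(p, q). i \<le> p \<and> p < j \<and> k \<le> q \<and> q < l}"

definition rect_ind :: "nat \<Rightarrow> nat \<Rightarrow> nat \<Rightarrow> nat \<Rightarrow> nat \<Rightarrow> nat \<Rightarrow> int" where
  "rect_ind i j k l p q = (if (p, q) \<in> rect i j k l then 1 else 0)"

definition valid_rect :: "nat \<Rightarrow> nat \<Rightarrow> nat \<Rightarrow> nat \<Rightarrow> nat \<Rightarrow> bool" where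
  "valid_rect n i j k l \<longleftrightarrow> i < j \<and> k < l \<and> i \<in> {1..n} \<and> j \<in> {1..n} \<and> k \<in> {1..n} \<and> l \<in> {1..n}"

definition essential :: "nat \<Rightarrow> imat \<Rightarrow> nat \<Rightarrow> nat \<Rightarrow> nat \<Rightarrow> nat \<Rightarrow> bool" where
  "essential n A i j k l \<longleftrightarrow> valid_rect n i j k l \<and>
     (\<forall>(p, q)\<in>rect i j k l.
        csum A p k = csum A p (k - 1) \<and>
        csum A p l = csum A p (l - 1) + 1 \<and>
        csum A i q = csum A (i - 1) q \<and>
        csum A j q = csum A (j - 1) q + 1)"

definition dual_essential :: "nat \<Rightarrow> imat \<Rightarrow> nat \<Rightarrow> nat \<Rightarrow> nat \<Rightarrow> nat \<Rightarrow> bool" where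
  "dual_essential n A i j k l \<longleftrightarrow> valid_rect n i j k l \<and>
     (\<forall>(p, q)\<in>rect i j k l.
        csum A p k = csum A p (k - 1) + 1 \<and>
        csum A p l = csum A p (l - 1) \<and>
        csum A i q = csum A (i - 1) q + 1 \<and>
        csum A j q = csum A (j - 1) q)"

text \<open>The matrix (supported on [n]x[n]) whose corner sum matrix is C (assuming C vanishes on
  row/column 0).\<close>
definition from_csum :: "nat \<Rightarrow> (nat \<Rightarrow> nat \<Rightarrow> int) \<Rightarrow> imat" where
  "from_csum n C p q =
     (if p \<in> {1..n} \<and> q \<in> {1..n}
      then C p q - C (p - 1) q - C p (q - 1) + C (p - 1) (q - 1) else 0)"

definition r_op :: "nat \<Rightarrow> nat \<Rightarrow> nat \<Rightarrow> nat \<Rightarrow> nat \<Rightarrow> imat \<Rightarrow> imat" where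
  "r_op n i j k l A =
     (if essential n A i j k l then from_csum n (\<lambda>p q. csum A p q + rect_ind i j k l p q)
      else if dual_essential n A i j k l then from_csum n (\<lambda>p q. csum A p q - rect_ind i j k l p q)
      else A)"

definition beta :: "nat \<Rightarrow> imat \<Rightarrow> int" where
  "beta n A = (\<Sum>i=1..n. \<Sum>j=1..n. int (min i j)) - (\<Sum>i=1..n. \<Sum>j=1..n. csum A i j)"

definition asm_edge :: "nat \<Rightarrow> imat \<Rightarrow> imat \<Rightarrow> bool" where
  "asm_edge n A B \<longleftrightarrow> is_ASM n A \<and> is_ASM n B \<and>
     (\<exists>i j k l. valid_rect n i j k l \<and> B = r_op n i j k l A \<and> beta n A < beta n B)"

end

theory Submission
  imports Defs
begin

lemma csum_0_left[simp]: "csum A 0 q = 0" by (simp add: csum_def)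
lemma csum_0_right[simp]: "csum A p 0 = 0" by (simp add: csum_def)
lemma csum_Suc_row: "csum A (Suc p) q = csum A p q + (\<Sum>k=1..q. A (Suc p) k)"
  unfolding csum_def by simp
lemma csum_Suc_col: "csum A p (Suc q) = csum A p q + (\<Sum>k=1..p. A k (Suc q))"
  unfolding csum_def by (simp add: sum.distrib)

lemma fc_row:
  assumes "1 \<le> p" "p \<le> n" "q \<le> n" "C p 0 = 0" "C (p-1) 0 = 0"
  shows "(\<Sum>k=1..q. from_csum n C p k) = C p q - C (p-1) q"
  using assms(3)
proof (induction q)
  case 0 then show ?case using assms by simp
next
  case (Suc q) then show ?case using assms by (simp add: from_csum_def)
qed

lemma fc_col:
  assumes "1 \<le> q" "q \<le> n" "p \<le> n" "C 0 q = 0" "C 0 (q-1) = 0"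
  shows "(\<Sum>k=1..p. from_csum n C k q) = C p q - C p (q-1)"
  using assms(3)
proof (induction p)
  case 0 then show ?case using assms by simp
next
  case (Suc p) then show ?case using assms by (simp add: from_csum_def)
qed

lemma csum_fc:
  assumes "\<forall>p. C p 0 = 0" "\<forall>q. C 0 q = 0" "p \<le> n" "q \<le> n"
  shows "csum (from_csum n C) p q = C p q"
  using assms(3)
proof (induction p)
  case 0 then show ?case using assms by simp
next
  case (Suc p)
  then have "csum (from_csum n C) (Suc p) q = C p q + (C (Suc p) q - C p q)"
    using fc_row[of "Suc p" n q C] assms by (simp add: csum_Suc_row)
  then show ?case by simp
qed

lemma fc_csum:
  assumes "is_ASM n A" shows "from_csum n (csum A) = A"
proof (intro ext)
  fix p q show "from_csum n (csum A) p q = A p q"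
  proof (cases "p \<in> {1..n} \<and> q \<in> {1..n}")
    case True
    then obtain p' q' where pq: "p = Suc p'" "q = Suc q'" by (cases p; cases q) auto
    show ?thesis using True unfolding pq by (simp add: from_csum_def csum_Suc_row)
  next
    case False then show ?thesis using assms by (auto simp: from_csum_def is_ASM_def)
  qed
qed

definition hf :: "nat \<Rightarrow> (nat \<Rightarrow> nat \<Rightarrow> int) \<Rightarrow> bool" where
"hf n C \<longleftrightarrow> (\<forall>p. C p 0 = 0) \<and> (\<forall>q. C 0 q = 0) \<and> (\<forall>p\<le>n. C p n = int p) \<and> (\<forall>q\<le>n. C n q = int q)
  \<and> (\<forall>p q. 1\<le>p \<longrightarrow> p\<le>n \<longrightarrow> q\<le>n \<longrightarrow> C p q - C (p-1) q \<in> {0,1})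
  \<and> (\<forall>p q. p\<le>n \<longrightarrow> 1\<le>q \<longrightarrow> q\<le>n \<longrightarrow> C p q - C p (q-1) \<in> {0,1})"

lemma hf_csum:
  assumes A: "is_ASM n A" shows "hf n (csum A)"
proof -
  have r: "csum A p n = int p" if "p \<le> n" for p
    using that
  proof (induction p)
    case (Suc p) then show ?case using A by (simp add: csum_Suc_row is_ASM_def)
  qed simp
  have c: "csum A n q = int q" if "q \<le> n" for q
    using that
  proof (induction q)
    case (Suc q) then show ?case using A by (simp add: csum_Suc_col is_ASM_def)
  qed simp
  have rd: "csum A p q - csum A (p-1) q \<in> {0,1}" if hp: "1\<le>p" "p\<le>n" "q\<le>n" for p q
  proof -
    obtain p' where p: "p = Suc p'" using hp(1) by (cases p) auto
    show ?thesis
    proof (cases "q = 0")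
      case False then show ?thesis using A hp unfolding p
        by (simp add: csum_Suc_row is_ASM_def)
    qed simp
  qed
  have cd: "csum A p q - csum A p (q-1) \<in> {0,1}" if hq: "p\<le>n" "1\<le>q" "q\<le>n" for p q
  proof -
    obtain q' where q: "q = Suc q'" using hq(2) by (cases q) auto
    show ?thesis
    proof (cases "p = 0")
      case False then show ?thesis using A hq unfolding q
        by (simp add: csum_Suc_col is_ASM_def)
    qed simp
  qed
  show ?thesis unfolding hf_def using r c rd cd by auto
qed

lemma hf_ASM:
  assumes H: "hf n C" shows "is_ASM n (from_csum n C)"
proof -
  have z: "\<forall>p. C p 0 = 0" "\<forall>q. C 0 q = 0" using H by (auto simp: hf_def)
  have rd: "\<And>p q. 1\<le>p \<Longrightarrow> p\<le>n \<Longrightarrow> q\<le>n \<Longrightarrow> C p q - C (p-1) q \<in> {0,1}"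
   and cd: "\<And>p q. p\<le>n \<Longrightarrow> 1\<le>q \<Longrightarrow> q\<le>n \<Longrightarrow> C p q - C p (q-1) \<in> {0,1}"
   and rn: "\<And>p. p\<le>n \<Longrightarrow> C p n = int p" and cn: "\<And>q. q\<le>n \<Longrightarrow> C n q = int q"
    using H by (auto simp: hf_def)
  have e: "from_csum n C p q \<in> {-1,0,1}" if "p\<in>{1..n}" "q\<in>{1..n}" for p q
  proof -
    have "from_csum n C p q = (C p q - C (p-1) q) - (C p (q-1) - C (p-1) (q-1))"
      using that by (simp add: from_csum_def)
    moreover have "C p q - C (p-1) q \<in> {0,1}" "C p (q-1) - C (p-1) (q-1) \<in> {0,1}"
      using that rd[of p q] rd[of p "q-1"] by auto
    ultimately show ?thesis by auto
  qed
  have rp: "(\<Sum>k=1..j. from_csum n C p k) \<in> {0,1}" if "p\<in>{1..n}" "j\<in>{1..n}" for p j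
    using fc_row[of p n j C] that z rd by auto
  have cp: "(\<Sum>k=1..i. from_csum n C k j) \<in> {0,1}" if "i\<in>{1..n}" "j\<in>{1..n}" for i j
    using fc_col[of j n i C] that z cd by auto
  have rs: "(\<Sum>k=1..n. from_csum n C p k) = 1" if "p\<in>{1..n}" for p
    using fc_row[of p n n C] that z rn[of p] rn[of "p-1"] by (auto simp: of_nat_diff)
  have cs: "(\<Sum>k=1..n. from_csum n C k q) = 1" if "q\<in>{1..n}" for q
    using fc_col[of q n n C] that z cn[of q] cn[of "q-1"] by (auto simp: of_nat_diff)
  show ?thesis unfolding is_ASM_def using e rp cp rs cs by (auto simp: from_csum_def)
qed


lemma rect_ind_nonneg: "rect_ind i j k l p q \<ge> 0" by (simp add: rect_ind_def)
lemma rect_ind_single: "rect_ind i (Suc i) j (Suc j) p q = (if p = i \<and> q = j then 1 else 0)"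
  by (auto simp: rect_ind_def rect_def)

lemma sumR:
  assumes "1\<le>i" "i\<le>n" "1\<le>j" "j\<le>n"
  shows "(\<Sum>p=1..n. \<Sum>q=1..n. rect_ind i (Suc i) j (Suc j) p q) = 1"
proof -
  have "\<And>p. (\<Sum>q=1..n. rect_ind i (Suc i) j (Suc j) p q) = (if p = i then 1 else 0)"
    using assms by (auto simp: rect_ind_single)
  then show ?thesis using assms by simp
qed

lemma edge_le:
  assumes "asm_edge n A B" shows "asm_le n A B"
proof -
  from assms obtain i j k l where A: "is_ASM n A" and v: "valid_rect n i j k l"
    and B: "B = r_op n i j k l A" and bt: "beta n A < beta n B"
    unfolding asm_edge_def by blast
  let ?R = "rect_ind i j k l"
  have R0: "?R p 0 = 0" "?R 0 q = 0" for p q using v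
    by (auto simp: rect_ind_def rect_def valid_rect_def)
  show ?thesis
  proof (cases "essential n A i j k l")
    case True
    then have Bd: "B = from_csum n (\<lambda>p q. csum A p q + ?R p q)" using B by (simp add: r_op_def)
    have cs: "csum B p q = csum A p q + ?R p q" if "p \<le> n" "q \<le> n" for p q
      unfolding Bd by (rule csum_fc) (use that R0 in auto)
    have "(\<Sum>p=1..n. \<Sum>q=1..n. csum A p q) \<le> (\<Sum>p=1..n. \<Sum>q=1..n. csum B p q)"
      by (intro sum_mono) (simp add: cs rect_ind_nonneg)
    then have "beta n B \<le> beta n A" by (simp add: beta_def)
    with bt show ?thesis by simp
  next
    case False
    show ?thesis
    proof (cases "dual_essential n A i j k l")
      case True
      then have Bd: "B = from_csum n (\<lambda>p q. csum A p q - ?R p q)" using B False by (simp add: r_op_def)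
      have cs: "csum B p q = csum A p q - ?R p q" if "p \<le> n" "q \<le> n" for p q
        unfolding Bd by (rule csum_fc) (use that R0 in auto)
      show ?thesis unfolding asm_le_def using cs rect_ind_nonneg by fastforce
    next
      case False2: False
      then have "B = A" using B False by (simp add: r_op_def)
      with bt show ?thesis by simp
    qed
  qed
qed

lemma asm_le_trans: "asm_le n A B \<Longrightarrow> asm_le n B C \<Longrightarrow> asm_le n A C"
  unfolding asm_le_def by (meson order_trans)

lemma bwd: assumes "(asm_edge n)\<^sup>*\<^sup>* A B" shows "asm_le n A B"
  using assms
proof (induction rule: rtranclp_induct)
  case base then show ?case by (simp add: asm_le_def)
next
  case (step y z) then show ?case using edge_le asm_le_trans by blast
qed


lemma rect_single: "rect i (Suc i) j (Suc j) = {(i,j)}"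
  by (auto simp: rect_def)

definition M :: "nat \<Rightarrow> imat \<Rightarrow> imat \<Rightarrow> nat" where
  "M n B A = (\<Sum>p=1..n. \<Sum>q=1..n. nat (csum A p q - csum B p q))"

lemma eq_csum_eq:
  assumes "is_ASM n A" "is_ASM n B" "\<forall>p\<in>{1..n}. \<forall>q\<in>{1..n}. csum A p q = csum B p q"
  shows "A = B"
proof -
  have e: "csum A p q = csum B p q" if "p \<le> n" "q \<le> n" for p q
    using assms(3) that by (cases "p = 0"; cases "q = 0") auto
  have "from_csum n (csum A) p q = from_csum n (csum B) p q" for p q
  proof (cases "p \<in> {1..n} \<and> q \<in> {1..n}")
    case True
    then have "csum A p q = csum B p q" "csum A (p-1) q = csum B (p-1) q"
      "csum A p (q-1) = csum B p (q-1)" "csum A (p-1) (q-1) = csum B (p-1) (q-1)"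
      by (auto intro!: e)
    then show ?thesis by (simp add: from_csum_def)
  qed (auto simp: from_csum_def)
  then have "from_csum n (csum A) = from_csum n (csum B)" by blast
  then show ?thesis using fc_csum assms(1,2) by metis
qed

lemma step:
  assumes A: "is_ASM n A" and B: "is_ASM n B" and le: "asm_le n A B"
    and ne: "A \<noteq> B"
  shows "\<exists>A'. asm_edge n A A' \<and> asm_le n A' B \<and> M n B A' < M n B A"
proof -
  define CA where "CA = csum A"
  define CB where "CB = csum B"
  have hA: "hf n CA" and hB: "hf n CB" using A B hf_csum CA_def CB_def by auto
  have Dge: "CB p q \<le> CA p q" if "p \<le> n" "q \<le> n" for p q
    using le that unfolding asm_le_def CA_def CB_def by (cases "p = 0"; cases "q = 0") auto
  define S where "S = {(p,q). p \<le> n \<and> q \<le> n \<and> CB p q < CA p q}"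
  have finS: "finite S"
    by (rule finite_subset[of _ "{0..n} \<times> {0..n}"]) (auto simp: S_def)
  have "S \<noteq> {}"
  proof
    assume "S = {}"
    then have "\<forall>p\<in>{1..n}. \<forall>q\<in>{1..n}. csum A p q = csum B p q"
      using Dge unfolding S_def CA_def CB_def by fastforce
    then show False using eq_csum_eq A B ne by blast
  qed
  define \<psi> where "\<psi> = (\<lambda>(p,q). int p + int q - 2 * CA p q)"
  obtain x where xS: "x \<in> S" and xm: "\<forall>y\<in>S. \<psi> x \<le> \<psi> y"
  proof -
    have "Min (\<psi> ` S) \<in> \<psi> ` S" using finS \<open>S \<noteq> {}\<close> by simp
    then obtain x where "x \<in> S" "\<psi> x = Min (\<psi> ` S)" by auto
    then show ?thesis using that finS by simp
  qed
  obtain i j where x: "x = (i,j)" by (cases x)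
  have ij: "i \<le> n" "j \<le> n" "CB i j < CA i j" using xS x S_def by auto
  have hA': "\<forall>p. CA p 0 = 0" "\<forall>q. CA 0 q = 0" "\<forall>p\<le>n. CA p n = int p" "\<forall>q\<le>n. CA n q = int q"
    "\<forall>p q. 1\<le>p \<longrightarrow> p\<le>n \<longrightarrow> q\<le>n \<longrightarrow> CA p q - CA (p-1) q \<in> {0,1}"
    "\<forall>p q. p\<le>n \<longrightarrow> 1\<le>q \<longrightarrow> q\<le>n \<longrightarrow> CA p q - CA p (q-1) \<in> {0,1}"
    using hA unfolding hf_def by auto
  have hB': "\<forall>p. CB p 0 = 0" "\<forall>q. CB 0 q = 0" "\<forall>p\<le>n. CB p n = int p" "\<forall>q\<le>n. CB n q = int q"
    "\<forall>p q. 1\<le>p \<longrightarrow> p\<le>n \<longrightarrow> q\<le>n \<longrightarrow> CB p q - CB (p-1) q \<in> {0,1}"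
    "\<forall>p q. p\<le>n \<longrightarrow> 1\<le>q \<longrightarrow> q\<le>n \<longrightarrow> CB p q - CB p (q-1) \<in> {0,1}"
    using hB unfolding hf_def by auto
  have i1: "1 \<le> i" using ij hA'(2) hB'(2) by (cases i) auto
  have j1: "1 \<le> j" using ij hA'(1) hB'(1) by (cases j) auto
  have in_: "i < n" using ij hA'(4) hB'(4) by (cases "i = n") auto
  have jn: "j < n" using ij hA'(3) hB'(3) by (cases "j = n") auto
  have a: "CA i j = CA (i-1) j + 1"
  proof (rule ccontr)
    assume "\<not> ?thesis"
    then have e: "CA i j = CA (i-1) j" using hA'(5) i1 ij by fastforce
    have "CB (i-1) j \<le> CB i j" using hB'(5) i1 ij by fastforce
    then have "(i-1, j) \<in> S" using e ij unfolding S_def by auto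
    then have "\<psi> (i,j) \<le> \<psi> (i-1,j)" using xm x by auto
    then show False using e i1 unfolding \<psi>_def by (simp add: of_nat_diff)
  qed
  have b: "CA i j = CA i (j-1) + 1"
  proof (rule ccontr)
    assume "\<not> ?thesis"
    then have e: "CA i j = CA i (j-1)" using hA'(6) j1 ij by fastforce
    have "CB i (j-1) \<le> CB i j" using hB'(6) j1 ij by fastforce
    then have "(i, j-1) \<in> S" using e ij unfolding S_def by auto
    then have "\<psi> (i,j) \<le> \<psi> (i,j-1)" using xm x by auto
    then show False using e j1 unfolding \<psi>_def by (simp add: of_nat_diff)
  qed
  have c: "CA (Suc i) j = CA i j"
  proof (rule ccontr)
    assume "\<not> ?thesis"
    moreover have "CA (Suc i) j - CA (Suc i - 1) j \<in> {0,1}" using hA'(5)[rule_format, of "Suc i" j] in_ ij by auto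
    ultimately have e: "CA (Suc i) j = CA i j + 1" by auto
    have "CB (Suc i) j \<le> CB i j + 1" using hB'(5) in_ ij by (fastforce simp: Suc_le_eq)
    then have "(Suc i, j) \<in> S" using e ij in_ unfolding S_def by auto
    then have "\<psi> (i,j) \<le> \<psi> (Suc i,j)" using xm x by auto
    then show False using e unfolding \<psi>_def by simp
  qed
  have d: "CA i (Suc j) = CA i j"
  proof (rule ccontr)
    assume "\<not> ?thesis"
    moreover have "CA i (Suc j) - CA i (Suc j - 1) \<in> {0,1}" using hA'(6)[rule_format, of i "Suc j"] jn ij by auto
    ultimately have e: "CA i (Suc j) = CA i j + 1" by auto
    have "CB i (Suc j) \<le> CB i j + 1" using hB'(6) jn ij by (fastforce simp: Suc_le_eq)
    then have "(i, Suc j) \<in> S" using e ij jn unfolding S_def by auto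
    then have "\<psi> (i,j) \<le> \<psi> (i,Suc j)" using xm x by auto
    then show False using e unfolding \<psi>_def by simp
  qed
  let ?R = "rect_ind i (Suc i) j (Suc j)"
  define C' where "C' = (\<lambda>p q. CA p q - ?R p q)"
  define A' where "A' = from_csum n C'"
  have de: "dual_essential n A i (Suc i) j (Suc j)"
    unfolding dual_essential_def valid_rect_def rect_single using i1 j1 in_ jn a b c d
    by (simp add: CA_def)
  have ne': "\<not> essential n A i (Suc i) j (Suc j)"
  proof
    assume "essential n A i (Suc i) j (Suc j)"
    then have "csum A i j = csum A i (j-1)" unfolding essential_def rect_def by auto
    with b show False by (simp add: CA_def)
  qed
  have rop: "r_op n i (Suc i) j (Suc j) A = A'" using de ne'
    by (simp add: r_op_def A'_def C'_def CA_def)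
  have C'z: "\<forall>p. C' p 0 = 0" "\<forall>q. C' 0 q = 0"
    using hA'(1,2) i1 j1 by (auto simp: C'_def rect_ind_single)
  have C'n: "\<forall>p\<le>n. C' p n = int p" "\<forall>q\<le>n. C' n q = int q"
    using hA'(3,4) in_ jn by (auto simp: C'_def rect_ind_single)
  have C'r: "C' p q - C' (p-1) q \<in> {0,1}" if "1\<le>p" "p\<le>n" "q\<le>n" for p q
  proof -
    have base: "CA p q - CA (p-1) q \<in> {0,1}" using hA'(5) that by auto
    consider "p = i \<and> q = j" | "p = Suc i \<and> q = j" | "\<not>(p = i \<and> q = j) \<and> \<not> (p - 1 = i \<and> q = j)"
      using that by force
    then show ?thesis
    proof cases
      case 1 then show ?thesis using a i1 by (auto simp: C'_def rect_ind_single)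
    next
      case 2 then show ?thesis using c by (auto simp: C'_def rect_ind_single)
    next
      case 3 then show ?thesis using base by (auto simp: C'_def rect_ind_single)
    qed
  qed
  have C'c: "C' p q - C' p (q-1) \<in> {0,1}" if "p\<le>n" "1\<le>q" "q\<le>n" for p q
  proof -
    have base: "CA p q - CA p (q-1) \<in> {0,1}" using hA'(6) that by auto
    consider "p = i \<and> q = j" | "p = i \<and> q = Suc j" | "\<not>(p = i \<and> q = j) \<and> \<not> (p = i \<and> q - 1 = j)"
      using that by force
    then show ?thesis
    proof cases
      case 1 then show ?thesis using b j1 by (auto simp: C'_def rect_ind_single)
    next
      case 2 then show ?thesis using d by (auto simp: C'_def rect_ind_single)
    next
      case 3 then show ?thesis using base by (auto simp: C'_def rect_ind_single)
    qed
  qed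
  have hC: "hf n C'" unfolding hf_def using C'z C'n C'r C'c by blast
  have isA': "is_ASM n A'" unfolding A'_def by (rule hf_ASM[OF hC])
  have csA': "csum A' p q = C' p q" if "p \<le> n" "q \<le> n" for p q
    unfolding A'_def by (rule csum_fc) (use C'z that in auto)
  have "(\<Sum>p=1..n. \<Sum>q=1..n. csum A' p q) = (\<Sum>p=1..n. \<Sum>q=1..n. CA p q - ?R p q)"
    by (intro sum.cong refl) (simp add: csA' C'_def)
  also have "\<dots> = (\<Sum>p=1..n. \<Sum>q=1..n. CA p q) - (\<Sum>p=1..n. \<Sum>q=1..n. ?R p q)"
    by (simp add: sum_subtractf)
  also have "\<dots> = (\<Sum>p=1..n. \<Sum>q=1..n. CA p q) - 1" using sumR i1 j1 in_ jn by simp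
  finally have "beta n A < beta n A'" by (simp add: beta_def CA_def)
  moreover have "valid_rect n i (Suc i) j (Suc j)" using i1 j1 in_ jn by (auto simp: valid_rect_def)
  ultimately have edge: "asm_edge n A A'" unfolding asm_edge_def using A isA' rop by metis
  have le': "asm_le n A' B"
    unfolding asm_le_def
  proof (intro ballI)
    fix p q assume "p \<in> {1..n}" "q \<in> {1..n}"
    then show "csum B p q \<le> csum A' p q" using csA' Dge ij
      by (auto simp: C'_def rect_ind_single CB_def)
  qed
  have "M n B A' < M n B A" unfolding M_def CB_def[symmetric] CA_def[symmetric]
  proof (rule sum_strict_mono_ex1)
    have inner: "nat (csum A' p q - CB p q) \<le> nat (CA p q - CB p q)" if "p \<in> {1..n}" "q \<in> {1..n}" for p q
      using that csA' rect_ind_nonneg by (simp add: C'_def nat_mono)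
    show "\<forall>p\<in>{1..n}. (\<Sum>q = 1..n. nat (csum A' p q - CB p q)) \<le> (\<Sum>q = 1..n. nat (CA p q - CB p q))"
      using inner by (auto intro: sum_mono)
    have "(\<Sum>q = 1..n. nat (csum A' i q - CB i q)) < (\<Sum>q = 1..n. nat (CA i q - CB i q))"
    proof (rule sum_strict_mono_ex1)
      show "\<forall>q\<in>{1..n}. nat (csum A' i q - CB i q) \<le> nat (CA i q - CB i q)"
        using inner i1 in_ by auto
      show "\<exists>q\<in>{1..n}. nat (csum A' i q - CB i q) < nat (CA i q - CB i q)"
        using csA' ij i1 j1 in_ jn by (auto simp: C'_def rect_ind_single intro!: bexI[of _ j])
    qed simp
    then show "\<exists>p\<in>{1..n}. (\<Sum>q = 1..n. nat (csum A' p q - CB p q)) < (\<Sum>q = 1..n. nat (CA p q - CB p q))"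
      using i1 in_ by auto
  qed simp
  then show ?thesis using edge le' by blast
qed

lemma fwd:
  assumes "is_ASM n B" shows "is_ASM n A \<Longrightarrow> asm_le n A B \<Longrightarrow> (asm_edge n)\<^sup>*\<^sup>* A B"
proof (induction A rule: measure_induct_rule[where f="M n B"])
  case (less A)
  show ?case
  proof (cases "A = B")
    case False
    then obtain A' where e: "asm_edge n A A'" and l: "asm_le n A' B" and m: "M n B A' < M n B A"
      using step[OF less.prems(1) assms less.prems(2)] by blast
    have "is_ASM n A'" using e by (simp add: asm_edge_def)
    then have "(asm_edge n)\<^sup>*\<^sup>* A' B" using less.IH m l by blast
    then show ?thesis using e by (meson converse_rtranclp_into_rtranclp)
  qed simp
qed
theorem mainTheorem3:
  fixes n :: nat and A B :: imat
  assumes "is_ASM n A" and "is_ASM n B"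
  shows "asm_le n A B \<longleftrightarrow> (asm_edge n)\<^sup>*\<^sup>* A B"
  using fwd[OF assms(2) assms(1)] bwd by blast

end
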